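(* Consider the fixed $p$-processor cup game or the variable-processor cup game, in the non-negative-fill version, where the emptier has $\varepsilon$ resource augmentation ($\varepsilon>0$). Then for every state $A$ and every game length $t\ge0$, $\operatorname{GREEDY}(A,t)=\operatorname{OPT}(A,t)$.
   Context: A state is a multiset of $n$ real nonnegative fills. In each round the filler chooses an integer $1\le p\le n$ (fixed $p$ in the $p$-processor game) and reals $a_i\in[0,1]$ with $\sum a_i=p$ and adds $a_i$ to cup $i$; then the emptier chooses $p$ distinct cups and replaces each of their fills $x$ by $\max(0,x-(1+\varepsilon))$. Backlog = maximum fill. $\operatorname{OPT}(S,0)$ is the backlog of $S$ and $\operatorname{OPT}(S,t)=\sup_{S'}\min_{S''}\operatorname{OPT}(S'',t-1)$ with $S'$ over states reachable from $S$ by a filler move and $S''$ over states reachable from $S'$ by an emptier move. $\operatorname{GREEDY}(S,t)$ is the supremum backlog a filler can achieve after $t$ rounds from $S$ when the emptier always empties the $p$ fullest cups. *)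

theory Defs
  imports Complex_Main
begin

text \<open>A state of the cup game on n cups is a list of n fills (indexed cups;
  the game is symmetric, so this represents the multiset of fills).\<close>

definition backlog :: "real list \<Rightarrow> real" where
  "backlog S = Max (set S)"

definition filler_move :: "nat \<Rightarrow> real list \<Rightarrow> real list \<Rightarrow> bool" where
  "filler_move p S a \<longleftrightarrow> length a = length S \<and> (\<forall>x\<in>set a. 0 \<le> x \<and> x \<le> 1)
     \<and> sum_list a = real p"

definition fill :: "real list \<Rightarrow> real list \<Rightarrow> real list" where
  "fill S a = map2 (+) S a"

definition emptier_move :: "nat \<Rightarrow> real list \<Rightarrow> nat set \<Rightarrow> bool" where
  "emptier_move p S E \<longleftrightarrow> E \<subseteq> {..<length S} \<and> card E = p"

definition empty_cups :: "real \<Rightarrow> nat set \<Rightarrow> real list \<Rightarrow> real list" where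
  "empty_cups \<epsilon> E S =
     map (\<lambda>i. if i \<in> E then max 0 (S ! i - (1 + \<epsilon>)) else S ! i) [0..<length S]"

definition greedy_move :: "nat \<Rightarrow> real list \<Rightarrow> nat set \<Rightarrow> bool" where
  "greedy_move p S E \<longleftrightarrow> emptier_move p S E \<and>
     (\<forall>i\<in>E. \<forall>j<length S. j \<notin> E \<longrightarrow> S ! j \<le> S ! i)"

text \<open>Ps is the set of processor counts the filler may choose each round:
  {p} for the fixed p-processor game, {1..n} for the variable-processor game.\<close>
fun OPT :: "nat set \<Rightarrow> real \<Rightarrow> real list \<Rightarrow> nat \<Rightarrow> real" where
  "OPT Ps \<epsilon> S 0 = backlog S"
| "OPT Ps \<epsilon> S (Suc t) =
    (SUP pa \<in> {(p, a). p \<in> Ps \<and> filler_move p S a}.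
       INF E \<in> {E. emptier_move (fst pa) (fill S (snd pa)) E}.
         OPT Ps \<epsilon> (empty_cups \<epsilon> E (fill S (snd pa))) t)"

fun GREEDY :: "nat set \<Rightarrow> real \<Rightarrow> real list \<Rightarrow> nat \<Rightarrow> real" where
  "GREEDY Ps \<epsilon> S 0 = backlog S"
| "GREEDY Ps \<epsilon> S (Suc t) =
    (SUP pa \<in> {(p, a). p \<in> Ps \<and> filler_move p S a}.
       INF E \<in> {E. greedy_move (fst pa) (fill S (snd pa)) E}.
         GREEDY Ps \<epsilon> (empty_cups \<epsilon> E (fill S (snd pa))) t)"

end

theory Submission
  imports Defs "HOL-Combinatorics.Permutations"
begin

definition PsOK :: "nat \<Rightarrow> nat set \<Rightarrow> bool" where
  "PsOK n Ps \<longleftrightarrow> Ps \<noteq> {} \<and> (\<forall>p\<in>Ps. p \<le> n)"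

lemma len_fill[simp]: "length a = length S \<Longrightarrow> length (fill S a) = length S"
  by (simp add: fill_def)

lemma nth_fill: "i < length S \<Longrightarrow> length a = length S \<Longrightarrow> fill S a ! i = S!i + a!i"
  by (simp add: fill_def)

lemma len_empty[simp]: "length (empty_cups \<epsilon> E S) = length S"
  by (simp add: empty_cups_def)

lemma nth_empty: "i < length S \<Longrightarrow> empty_cups \<epsilon> E S ! i = (if i \<in> E then max 0 (S!i - (1+\<epsilon>)) else S!i)"
  by (simp add: empty_cups_def)

lemma filler_ex: assumes "p \<le> length S" shows "\<exists>a. filler_move p S a"
proof -
  let ?a = "replicate p (1::real) @ replicate (length S - p) 0"
  have "filler_move p S ?a" using assms by (auto simp: filler_move_def sum_list_replicate)
  then show ?thesis by blast
qed

lemma emptier_ex: assumes "p \<le> length S" shows "\<exists>E. emptier_move p S E"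
proof -
  have "emptier_move p S {..<p}" using assms by (auto simp: emptier_move_def)
  then show ?thesis by blast
qed

lemma finite_emptier: "finite {E. emptier_move p S E}"
proof -
  have "{E. emptier_move p S E} \<subseteq> Pow {..<length S}" by (auto simp: emptier_move_def)
  then show ?thesis by (rule finite_subset) simp
qed

lemma backlog_le:
  assumes "length L > 0" "\<forall>i<length L. \<exists>j<length R. L!i \<le> R!j"
  shows "backlog L \<le> backlog R"
proof -
  have "Max (set L) \<in> set L" using assms(1) by (intro Max_in) auto
  then obtain i where i: "i < length L" "Max (set L) = L!i" by (metis in_set_conv_nth)
  obtain j where j: "j < length R" "L!i \<le> R!j" using assms(2) i(1) by blast
  have "R!j \<le> Max (set R)" using j(1) by (intro Max_ge) auto
  then show ?thesis using i j unfolding backlog_def by linarith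
qed

lemma opt_bound:
  assumes "PsOK (length S) Ps" "length S > 0" "\<forall>x\<in>set S. 0 \<le> x \<and> x \<le> M" "\<epsilon> \<ge> 0"
  shows "OPT Ps \<epsilon> S t \<le> M + t"
  using assms
proof (induction t arbitrary: S M)
  case 0
  have "Max (set S) \<in> set S" using 0 by (intro Max_in) auto
  then show ?case using 0 by (simp add: backlog_def)
next
  case (Suc t)
  let ?P = "{(p, a). p \<in> Ps \<and> filler_move p S a}"
  have ne: "?P \<noteq> {}"
  proof -
    obtain p where p: "p \<in> Ps" using Suc.prems(1) unfolding PsOK_def by blast
    then have "p \<le> length S" using Suc.prems(1) unfolding PsOK_def by blast
    then obtain a where "filler_move p S a" using filler_ex by blast
    then show ?thesis using p by blast
  qed
  show ?case unfolding OPT.simps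
  proof (rule cSUP_least[OF ne])
    fix pa assume "pa \<in> ?P"
    then obtain p a where pa: "pa = (p,a)" "p \<in> Ps" "filler_move p S a" by blast
    have pl: "p \<le> length S" using pa Suc.prems(1) unfolding PsOK_def by blast
    have la: "length a = length S" using pa unfolding filler_move_def by simp
    obtain E0 where E0: "emptier_move p (fill S a) E0" using emptier_ex[of p "fill S a"] pl la by auto
    let ?X = "empty_cups \<epsilon> E0 (fill S a)"
    have lX: "length ?X = length S" using la by simp
    have bX: "\<forall>x\<in>set ?X. 0 \<le> x \<and> x \<le> M + 1"
    proof
      fix x assume "x \<in> set ?X"
      then obtain i where i: "i < length S" "x = ?X ! i" using lX by (metis in_set_conv_nth)
      have "S!i \<in> set S" "a!i \<in> set a" using i la by auto
      then have "0 \<le> S!i" "S!i \<le> M" "0 \<le> a!i" "a!i \<le> 1" using Suc.prems(3) pa(3) unfolding filler_move_def by auto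
      then show "0 \<le> x \<and> x \<le> M + 1" using i la Suc.prems(4) by (auto simp: nth_empty nth_fill)
    qed
    have "(INF E\<in>{E. emptier_move (fst pa) (fill S (snd pa)) E}. OPT Ps \<epsilon> (empty_cups \<epsilon> E (fill S (snd pa))) t)
        \<le> OPT Ps \<epsilon> ?X t"
      unfolding pa fst_conv snd_conv
      by (rule cINF_lower[OF bdd_below_finite[OF finite_imageI[OF finite_emptier]]]) (use E0 in simp)
    also have "\<dots> \<le> (M + 1) + t"
      by (rule Suc.IH[of ?X "M+1"]) (use lX bX Suc.prems in auto)
    finally show "(INF E\<in>{E. emptier_move (fst pa) (fill S (snd pa)) E}. OPT Ps \<epsilon> (empty_cups \<epsilon> E (fill S (snd pa))) t)
        \<le> M + real (Suc t)" by simp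
  qed
qed

lemma inner_bound:
  assumes "PsOK (length S) Ps" "length S > 0" "\<forall>x\<in>set S. 0 \<le> x \<and> x \<le> M" "\<epsilon> \<ge> 0"
    and "p \<in> Ps" "filler_move p S a"
  shows "(INF E\<in>{E. emptier_move p (fill S a) E}. OPT Ps \<epsilon> (empty_cups \<epsilon> E (fill S a)) t) \<le> M + 1 + t"
proof -
  have pl: "p \<le> length S" using assms unfolding PsOK_def by blast
  have la: "length a = length S" using assms unfolding filler_move_def by simp
  obtain E0 where E0: "emptier_move p (fill S a) E0" using emptier_ex[of p "fill S a"] pl la by auto
  let ?X = "empty_cups \<epsilon> E0 (fill S a)"
  have lX: "length ?X = length S" using la by simp
  have bX: "\<forall>x\<in>set ?X. 0 \<le> x \<and> x \<le> M + 1"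
  proof
    fix x assume "x \<in> set ?X"
    then obtain i where i: "i < length S" "x = ?X ! i" using lX by (metis in_set_conv_nth)
    have "S!i \<in> set S" "a!i \<in> set a" using i la by auto
    then have "0 \<le> S!i" "S!i \<le> M" "0 \<le> a!i" "a!i \<le> 1" using assms(3,6) unfolding filler_move_def by auto
    then show "0 \<le> x \<and> x \<le> M + 1" using i la assms(4) by (auto simp: nth_empty nth_fill)
  qed
  have "(INF E\<in>{E. emptier_move p (fill S a) E}. OPT Ps \<epsilon> (empty_cups \<epsilon> E (fill S a)) t)
        \<le> OPT Ps \<epsilon> ?X t"
    by (rule cINF_lower[OF bdd_below_finite[OF finite_imageI[OF finite_emptier]]]) (use E0 in simp)
  also have "\<dots> \<le> (M + 1) + t"
    by (rule opt_bound) (use lX bX assms in auto)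
  finally show ?thesis by simp
qed

lemma opt_step:
  assumes ok: "PsOK (length R) Ps" and len: "length L = length R" "length R > 0"
    and nn: "\<forall>x\<in>set R. 0 \<le> x" and eps: "\<epsilon> \<ge> 0"
    and sim: "\<And>p a. p \<in> Ps \<Longrightarrow> filler_move p L a \<Longrightarrow> \<exists>a'. filler_move p R a' \<and>
       (\<forall>E'. emptier_move p (fill R a') E' \<longrightarrow> (\<exists>E. emptier_move p (fill L a) E \<and>
          OPT Ps \<epsilon> (empty_cups \<epsilon> E (fill L a)) t \<le> OPT Ps \<epsilon> (empty_cups \<epsilon> E' (fill R a')) t))"
  shows "OPT Ps \<epsilon> L (Suc t) \<le> OPT Ps \<epsilon> R (Suc t)"
proof -
  let ?PL = "{(p, a). p \<in> Ps \<and> filler_move p L a}"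
  let ?PR = "{(p, a). p \<in> Ps \<and> filler_move p R a}"
  let ?V = "\<lambda>S pa. (INF E\<in>{E. emptier_move (fst pa) (fill S (snd pa)) E}. OPT Ps \<epsilon> (empty_cups \<epsilon> E (fill S (snd pa))) t)"
  have ne: "?PL \<noteq> {}"
  proof -
    obtain p where p: "p \<in> Ps" using ok unfolding PsOK_def by blast
    then have "p \<le> length L" using ok len unfolding PsOK_def by auto
    then obtain a where "filler_move p L a" using filler_ex by blast
    then show ?thesis using p by blast
  qed
  define M where "M = Max (set R)"
  have bR: "\<forall>x\<in>set R. 0 \<le> x \<and> x \<le> M" using nn len unfolding M_def by auto
  have bdd: "bdd_above (?V R ` ?PR)"
  proof (rule bdd_aboveI)
    fix y assume "y \<in> ?V R ` ?PR"
    then obtain p a where "p \<in> Ps" "filler_move p R a" "y = ?V R (p,a)" by auto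
    then show "y \<le> M + 1 + t" using inner_bound[OF ok len(2) bR eps] by simp
  qed
  show ?thesis unfolding OPT.simps
  proof (rule cSUP_least[OF ne])
    fix pa assume "pa \<in> ?PL"
    then obtain p a where pa: "pa = (p,a)" "p \<in> Ps" "filler_move p L a" by blast
    obtain a' where a': "filler_move p R a'" and
      sa: "\<forall>E'. emptier_move p (fill R a') E' \<longrightarrow> (\<exists>E. emptier_move p (fill L a) E \<and>
          OPT Ps \<epsilon> (empty_cups \<epsilon> E (fill L a)) t \<le> OPT Ps \<epsilon> (empty_cups \<epsilon> E' (fill R a')) t)"
      using sim[OF pa(2,3)] by blast
    have pl: "p \<le> length R" using pa ok unfolding PsOK_def by blast
    have la': "length a' = length R" using a' unfolding filler_move_def by simp
    have neE: "{E. emptier_move p (fill R a') E} \<noteq> {}" using emptier_ex[of p "fill R a'"] pl la' by auto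
    have "?V L pa \<le> ?V R (p, a')"
      unfolding pa fst_conv snd_conv
    proof (rule cINF_greatest[OF neE])
      fix E' assume "E' \<in> {E. emptier_move p (fill R a') E}"
      then obtain E where E: "emptier_move p (fill L a) E"
        "OPT Ps \<epsilon> (empty_cups \<epsilon> E (fill L a)) t \<le> OPT Ps \<epsilon> (empty_cups \<epsilon> E' (fill R a')) t"
        using sa by auto
      have "(INF E\<in>{E. emptier_move p (fill L a) E}. OPT Ps \<epsilon> (empty_cups \<epsilon> E (fill L a)) t)
         \<le> OPT Ps \<epsilon> (empty_cups \<epsilon> E (fill L a)) t"
        by (rule cINF_lower[OF bdd_below_finite[OF finite_imageI[OF finite_emptier]]]) (use E in simp)
      then show "(INF E\<in>{E. emptier_move p (fill L a) E}. OPT Ps \<epsilon> (empty_cups \<epsilon> E (fill L a)) t)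
         \<le> OPT Ps \<epsilon> (empty_cups \<epsilon> E' (fill R a')) t" using E(2) by linarith
    qed
    also have "?V R (p, a') \<le> (SUP pa\<in>?PR. ?V R pa)"
      by (rule cSUP_upper[OF _ bdd]) (use pa a' in auto)
    finally show "?V L pa \<le> (SUP pa\<in>?PR. ?V R pa)" .
  qed
qed

definition pw :: "real list \<Rightarrow> real list \<Rightarrow> bool" where
  "pw X Y \<longleftrightarrow> length X = length Y \<and> (\<forall>i<length Y. X!i \<le> Y!i)"

definition swl :: "nat \<Rightarrow> nat \<Rightarrow> real list \<Rightarrow> real list" where
  "swl g e Z = permute_list (Transposition.transpose g e) Z"

definition tr :: "nat \<Rightarrow> nat \<Rightarrow> real \<Rightarrow> real list \<Rightarrow> real list" where
  "tr g e k Z = map (\<lambda>i. if i = g then Z!g - k else if i = e then Z!e + k else Z!i) [0..<length Z]"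

definition nonneg :: "real list \<Rightarrow> bool" where
  "nonneg Z \<longleftrightarrow> (\<forall>x\<in>set Z. 0 \<le> x)"

lemma nonneg_nth: "nonneg Z \<longleftrightarrow> (\<forall>i<length Z. 0 \<le> Z!i)"
  unfolding nonneg_def by (metis in_set_conv_nth)

lemma tperm: "g < n \<Longrightarrow> e < n \<Longrightarrow> Transposition.transpose g e permutes {..<n}"
  by (rule permutes_swap_id) auto

lemma len_swl[simp]: "length (swl g e Z) = length Z"
  by (simp add: swl_def)

lemma nth_swl: "g < length Z \<Longrightarrow> e < length Z \<Longrightarrow> i < length Z \<Longrightarrow> swl g e Z ! i = Z ! Transposition.transpose g e i"
  unfolding swl_def by (rule permute_list_nth[OF tperm])

lemma mset_swl: "g < length Z \<Longrightarrow> e < length Z \<Longrightarrow> mset (swl g e Z) = mset Z"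
  unfolding swl_def by (rule mset_permute_list[OF tperm])

lemma len_tr[simp]: "length (tr g e k Z) = length Z"
  by (simp add: tr_def)

lemma nth_tr: "i < length Z \<Longrightarrow> tr g e k Z ! i = (if i = g then Z!g - k else if i = e then Z!e + k else Z!i)"
  by (simp add: tr_def)

lemma sum_tr: assumes "g < length Z" "e < length Z" "g \<noteq> e" shows "sum_list (tr g e k Z) = sum_list Z"
proof -
  let ?n = "length Z"
  have A: "sum_list (tr g e k Z) = (\<Sum>i\<in>{0..<?n}. tr g e k Z ! i)" by (simp add: sum_list_sum_nth)
  have B: "sum_list Z = (\<Sum>i\<in>{0..<?n}. Z ! i)" by (simp add: sum_list_sum_nth)
  have "(\<Sum>i\<in>{0..<?n}. tr g e k Z ! i) = (\<Sum>i\<in>{0..<?n}. Z ! i + (if i = e then k else 0) - (if i = g then k else 0))"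
    by (rule sum.cong) (auto simp: nth_tr assms)
  also have "\<dots> = (\<Sum>i\<in>{0..<?n}. Z ! i) + (\<Sum>i\<in>{0..<?n}. (if i = e then k else 0)) - (\<Sum>i\<in>{0..<?n}. (if i = g then k else 0))"
    by (simp add: sum.distrib sum_subtractf)
  also have "\<dots> = (\<Sum>i\<in>{0..<?n}. Z ! i)" using assms by (simp add: sum.delta)
  finally show ?thesis using A B by simp
qed

lemma pw_refl: "pw X X" by (simp add: pw_def)

lemma filler_len: "filler_move p S a \<Longrightarrow> length a = length S"
  by (simp add: filler_move_def)

lemma filler_nth: "filler_move p S a \<Longrightarrow> i < length S \<Longrightarrow> 0 \<le> a!i \<and> a!i \<le> 1"
  unfolding filler_move_def by (metis nth_mem)

lemma nonneg_after:
  assumes "nonneg S" "filler_move p S a"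
  shows "nonneg (fill S a)" "nonneg (empty_cups \<epsilon> E (fill S a))"
proof -
  have la: "length a = length S" using assms by (simp add: filler_len)
  show "nonneg (fill S a)" unfolding nonneg_nth
  proof (intro allI impI)
    fix i assume i: "i < length (fill S a)"
    then have "0 \<le> S!i" "0 \<le> a!i" using assms la filler_nth[OF assms(2)] by (auto simp: nonneg_nth)
    then show "0 \<le> fill S a ! i" using i la by (simp add: nth_fill)
  qed
  then show "nonneg (empty_cups \<epsilon> E (fill S a))" unfolding nonneg_nth using la
    by (auto simp: nth_empty)
qed

lemma sim_pw:
  assumes "pw L R" "filler_move p L a"
  shows "filler_move p R a \<and> (\<forall>E'. emptier_move p (fill R a) E' \<longrightarrow> emptier_move p (fill L a) E' \<and>
           pw (empty_cups \<epsilon> E' (fill L a)) (empty_cups \<epsilon> E' (fill R a)))"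
proof -
  have ll: "length L = length R" using assms(1) by (simp add: pw_def)
  have la: "length a = length L" using assms(2) by (simp add: filler_len)
  have "filler_move p R a" using assms(2) ll by (simp add: filler_move_def)
  moreover have "emptier_move p (fill L a) E' \<and> pw (empty_cups \<epsilon> E' (fill L a)) (empty_cups \<epsilon> E' (fill R a))"
    if "emptier_move p (fill R a) E'" for E'
  proof
    show "emptier_move p (fill L a) E'" using that ll la by (simp add: emptier_move_def)
    have "\<forall>i<length R. L!i \<le> R!i" using assms(1) by (simp add: pw_def)
    then show "pw (empty_cups \<epsilon> E' (fill L a)) (empty_cups \<epsilon> E' (fill R a))"
      using ll la unfolding pw_def by (auto simp: nth_empty nth_fill)
  qed
  ultimately show ?thesis by blast
qed

lemma swap_fill:
  assumes "L = swl g e R" "g < length R" "e < length R" "filler_move p L a"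
  shows "filler_move p R (swl g e a) \<and> fill L a = swl g e (fill R (swl g e a))"
proof
  have la: "length a = length R" using assms by (simp add: filler_len)
  have ms: "mset (swl g e a) = mset a" using assms la by (intro mset_swl) auto
  have "set (swl g e a) = set a" by (rule mset_eq_setD[OF ms])
  moreover have "sum_list (swl g e a) = sum_list a" by (metis ms sum_mset_sum_list)
  ultimately show "filler_move p R (swl g e a)" using assms(4) la assms(1) by (simp add: filler_move_def)
  show "fill L a = swl g e (fill R (swl g e a))"
  proof (rule nth_equalityI)
    show "length (fill L a) = length (swl g e (fill R (swl g e a)))" using la assms(1) by simp
    fix i assume "i < length (fill L a)"
    then have i: "i < length R" using la assms(1) by simp
    have ti: "Transposition.transpose g e i < length R" using i assms(2,3) by (auto simp: transpose_def)
    show "fill L a ! i = swl g e (fill R (swl g e a)) ! i"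
      using i ti la assms by (simp add: nth_fill nth_swl)
  qed
qed

lemma swap_empty:
  assumes "X = swl g e Y" "g < length Y" "e < length Y" "emptier_move p Y E'"
  shows "emptier_move p X (Transposition.transpose g e ` E') \<and>
         empty_cups \<epsilon> (Transposition.transpose g e ` E') X = swl g e (empty_cups \<epsilon> E' Y)"
proof
  let ?t = "Transposition.transpose g e"
  have sub: "E' \<subseteq> {..<length Y}" and cE: "card E' = p" using assms(4) by (auto simp: emptier_move_def)
  have "?t ` E' \<subseteq> {..<length Y}" using sub assms(2,3) by (auto simp: transpose_def)
  moreover have "card (?t ` E') = p" using cE by (simp add: card_image)
  ultimately show "emptier_move p X (?t ` E')" using assms(1) by (simp add: emptier_move_def)
  have mem: "i \<in> ?t ` E' \<longleftrightarrow> ?t i \<in> E'" for i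
    by (metis image_iff transpose_involutory)
  show "empty_cups \<epsilon> (?t ` E') X = swl g e (empty_cups \<epsilon> E' Y)"
  proof (rule nth_equalityI)
    show "length (empty_cups \<epsilon> (?t ` E') X) = length (swl g e (empty_cups \<epsilon> E' Y))" using assms(1) by simp
    fix i assume "i < length (empty_cups \<epsilon> (?t ` E') X)"
    then have i: "i < length Y" using assms(1) by simp
    have ti: "?t i < length Y" using i assms(2,3) by (auto simp: transpose_def)
    show "empty_cups \<epsilon> (?t ` E') X ! i = swl g e (empty_cups \<epsilon> E' Y) ! i"
      using i ti assms mem by (simp add: nth_empty nth_swl)
  qed
qed

lemma tr_fill:
  assumes L: "L = tr g e \<kappa> R" and ge: "g < length R" "e < length R" "g \<noteq> e"
    and kap: "\<kappa> \<le> R!g - R!e" and fm: "filler_move p L a"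
  shows "\<exists>a'. filler_move p R a' \<and> ((fill L a = tr g e \<kappa> (fill R a') \<and> \<kappa> \<le> fill R a' ! g - fill R a' ! e)
            \<or> fill L a = swl g e (fill R a'))"
proof -
  have la: "length a = length R" using fm L by (simp add: filler_len)
  have ll: "length L = length R" using L by simp
  have fmR: "filler_move p R a" using fm ll by (simp add: filler_move_def)
  define D where "D = R!g - R!e - \<kappa>"
  have ag: "0 \<le> a!g" "a!g \<le> 1" and ae: "0 \<le> a!e" "a!e \<le> 1"
    using filler_nth[OF fm] ge ll by auto
  show ?thesis
  proof (cases "a!e \<le> a!g + D")
    case True
    have "fill L a = tr g e \<kappa> (fill R a)"
    proof (rule nth_equalityI)
      show "length (fill L a) = length (tr g e \<kappa> (fill R a))" using la ll by simp
      fix i assume "i < length (fill L a)"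
      then have i: "i < length R" using la ll by simp
      show "fill L a ! i = tr g e \<kappa> (fill R a) ! i" using i la ll ge L
        by (auto simp: nth_fill nth_tr)
    qed
    moreover have "\<kappa> \<le> fill R a ! g - fill R a ! e" using True ge la unfolding D_def by (simp add: nth_fill)
    ultimately show ?thesis using fmR by blast
  next
    case False
    define a' where "a' = tr g e (a!g + D - a!e) a"
    have la': "length a' = length R" using la by (simp add: a'_def)
    have a'g: "a'!g = a!e - D" and a'e: "a'!e = a!g + D" using ge la by (auto simp: a'_def nth_tr)
    have D0: "D \<ge> 0" using kap by (simp add: D_def)
    have "\<forall>x\<in>set a'. 0 \<le> x \<and> x \<le> 1"
    proof
      fix x assume "x \<in> set a'"
      then obtain i where i: "i < length R" "x = a'!i" using la' by (metis in_set_conv_nth)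
      show "0 \<le> x \<and> x \<le> 1"
      proof (cases "i = g \<or> i = e")
        case True
        then show ?thesis using i a'g a'e ag ae False D0 by auto
      next
        case False
        then have "x = a!i" using i la by (simp add: a'_def nth_tr)
        then show ?thesis using filler_nth[OF fmR i(1)] by simp
      qed
    qed
    moreover have "sum_list a' = sum_list a" unfolding a'_def using ge la by (intro sum_tr) auto
    ultimately have fm': "filler_move p R a'" using fmR la' by (simp add: filler_move_def)
    have "fill L a = swl g e (fill R a')"
    proof (rule nth_equalityI)
      show "length (fill L a) = length (swl g e (fill R a'))" using la la' ll by simp
      fix i assume "i < length (fill L a)"
      then have i: "i < length R" using la ll by simp
      have ti: "Transposition.transpose g e i < length R" using i ge by (auto simp: transpose_def)
      show "fill L a ! i = swl g e (fill R a') ! i"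
      proof (cases "i = g \<or> i = e")
        case True
        then show ?thesis using i ti la la' ll ge L a'g a'e
          by (auto simp: nth_fill nth_tr nth_swl D_def)
      next
        case False
        then have "Transposition.transpose g e i = i" by simp
        then show ?thesis using i False la la' ll ge L
          by (simp add: nth_fill nth_tr nth_swl a'_def)
      qed
    qed
    then show ?thesis using fm' by blast
  qed
qed

lemma pw_tr_intro:
  assumes "length X = length Y" "g < length Y" "e < length Y" "g \<noteq> e"
    "X!g \<le> Y!g - k" "X!e \<le> Y!e + k" "\<And>i. i < length Y \<Longrightarrow> i \<noteq> g \<Longrightarrow> i \<noteq> e \<Longrightarrow> X!i \<le> Y!i"
  shows "pw X (tr g e k Y)"
  unfolding pw_def using assms by (auto simp: nth_tr)

lemma pw_swl_intro:
  assumes "length X = length Y" "g < length Y" "e < length Y" "g \<noteq> e"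
    "X!g \<le> Y!e" "X!e \<le> Y!g" "\<And>i. i < length Y \<Longrightarrow> i \<noteq> g \<Longrightarrow> i \<noteq> e \<Longrightarrow> X!i \<le> Y!i"
  shows "pw X (swl g e Y)"
  unfolding pw_def
proof (intro conjI allI impI)
  fix i assume i: "i < length (swl g e Y)"
  show "X ! i \<le> swl g e Y ! i"
  proof (cases "i = g \<or> i = e")
    case True then show ?thesis using assms i by (auto simp: nth_swl)
  next
    case False then show ?thesis using assms i by (auto simp: nth_swl)
  qed
qed (use assms in simp)

lemma tr_empty:
  assumes X: "X = tr g e (real k * (1+\<epsilon>)) Y" and ge: "g < length Y" "e < length Y" "g \<noteq> e"
    and kap: "real k * (1+\<epsilon>) \<le> Y!g - Y!e" and nn: "nonneg Y" and eps: "\<epsilon> \<ge> 0"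
    and em: "emptier_move p Y E'"
  shows "\<exists>E. emptier_move p X E \<and>
     (pw (empty_cups \<epsilon> E X) (empty_cups \<epsilon> E' Y) \<or> pw (empty_cups \<epsilon> E X) (swl g e (empty_cups \<epsilon> E' Y)) \<or>
      (\<exists>j. real j * (1+\<epsilon>) \<le> empty_cups \<epsilon> E' Y ! g - empty_cups \<epsilon> E' Y ! e \<and>
           pw (empty_cups \<epsilon> E X) (tr g e (real j * (1+\<epsilon>)) (empty_cups \<epsilon> E' Y))))"
proof (cases "k = 0")
  case True
  have "X = Y" unfolding X True by (intro nth_equalityI) (auto simp: nth_tr)
  then show ?thesis using em pw_refl by blast
next
  case False
  let ?t = "Transposition.transpose g e"
  let ?C = "1 + \<epsilon>"
  define E where "E = ?t ` E'"
  define X' where "X' = empty_cups \<epsilon> E X"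
  define Y' where "Y' = empty_cups \<epsilon> E' Y"
  have lX: "length X = length Y" using X by simp
  have emE: "emptier_move p X E"
  proof -
    have sub: "E' \<subseteq> {..<length Y}" and cE: "card E' = p" using em by (auto simp: emptier_move_def)
    have "?t ` E' \<subseteq> {..<length Y}" using sub ge by (auto simp: transpose_def)
    moreover have "card (?t ` E') = p" using cE by (simp add: card_image)
    ultimately show ?thesis using lX by (simp add: emptier_move_def E_def)
  qed
  have mem: "i \<in> E \<longleftrightarrow> ?t i \<in> E'" for i
    unfolding E_def by (metis image_iff transpose_involutory)
  have memg: "g \<in> E \<longleftrightarrow> e \<in> E'" and meme: "e \<in> E \<longleftrightarrow> g \<in> E'" using mem by auto
  have lens: "length X' = length Y'" using lX by (simp add: X'_def Y'_def)
  have lY': "length Y' = length Y" by (simp add: Y'_def)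
  have oth: "X'!i \<le> Y'!i" if "i < length Y" "i \<noteq> g" "i \<noteq> e" for i
    using that mem lX by (simp add: X'_def Y'_def nth_empty X nth_tr)
  define y1 where "y1 = Y!g"
  define y2 where "y2 = Y!e"
  define \<kappa> where "\<kappa> = real k * ?C"
  have k1: "\<kappa> \<ge> ?C" using False eps unfolding \<kappa>_def
    by (metis add_increasing2 eps less_one mult_le_cancel_right1 not_less of_nat_1 of_nat_le_iff
        of_nat_0_le_iff zero_less_one_class.zero_le_one linorder_not_le)
  have y2: "y2 \<ge> 0" using nn ge unfolding nonneg_nth y2_def by auto
  have kap': "\<kappa> \<le> y1 - y2" using kap by (simp add: \<kappa>_def y1_def y2_def)
  have X'g: "X'!g = (if e \<in> E' then max 0 (y1 - \<kappa> - ?C) else y1 - \<kappa>)"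
    using ge lX memg by (simp add: X'_def nth_empty X nth_tr y1_def \<kappa>_def)
  have X'e: "X'!e = (if g \<in> E' then max 0 (y2 + \<kappa> - ?C) else y2 + \<kappa>)"
    using ge lX meme by (simp add: X'_def nth_empty X nth_tr y2_def \<kappa>_def)
  have Y'g: "Y'!g = (if g \<in> E' then max 0 (y1 - ?C) else y1)"
    using ge by (simp add: Y'_def nth_empty y1_def)
  have Y'e: "Y'!e = (if e \<in> E' then max 0 (y2 - ?C) else y2)"
    using ge by (simp add: Y'_def nth_empty y2_def)
  have TR: "pw X' (tr g e (real j * ?C) Y')" if "X'!g \<le> Y'!g - real j * ?C" "X'!e \<le> Y'!e + real j * ?C" for j
    by (rule pw_tr_intro) (use lens lY' ge that oth in auto)
  have SW: "pw X' (swl g e Y')" if "X'!g \<le> Y'!e" "X'!e \<le> Y'!g"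
    by (rule pw_swl_intro) (use lens lY' ge that oth in auto)
  have kk: "real (k - 1) * ?C = \<kappa> - ?C" "real (k + 1) * ?C = \<kappa> + ?C"
    using False by (auto simp: \<kappa>_def of_nat_diff algebra_simps)
  have main: "pw X' Y' \<or> pw X' (swl g e Y') \<or>
      (\<exists>j. real j * ?C \<le> Y' ! g - Y' ! e \<and> pw X' (tr g e (real j * ?C) Y'))"
  proof (cases "g \<in> E'")
    case gin: True
    show ?thesis
    proof (cases "e \<in> E'")
      case ein: True
      show ?thesis
      proof (cases "y2 \<ge> ?C")
        case True
        then have "X'!g \<le> Y'!g - real k * ?C" "X'!e \<le> Y'!e + real k * ?C" "real k * ?C \<le> Y'!g - Y'!e"
          using X'g X'e Y'g Y'e gin ein kap' y2 k1 unfolding \<kappa>_def[symmetric] by auto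
        then show ?thesis using TR by blast
      next
        case y2C: False
        show ?thesis
        proof (cases "y1 - \<kappa> \<ge> ?C")
          case True
          then have "X'!g \<le> Y'!g - real k * ?C" "X'!e \<le> Y'!e + real k * ?C" "real k * ?C \<le> Y'!g - Y'!e"
            using X'g X'e Y'g Y'e gin ein kap' y2C y2 k1 unfolding \<kappa>_def[symmetric] by auto
          then show ?thesis using TR by blast
        next
          case False
          then have "X'!g \<le> Y'!e" "X'!e \<le> Y'!g"
            using X'g X'e Y'g Y'e gin ein kap' y2C y2 k1 by auto
          then show ?thesis using SW by blast
        qed
      qed
    next
      case ein: False
      have "X'!g \<le> Y'!g - real (k-1) * ?C" "X'!e \<le> Y'!e + real (k-1) * ?C" "real (k-1) * ?C \<le> Y'!g - Y'!e"
        using X'g X'e Y'g Y'e gin ein kap' y2 k1 unfolding kk by auto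
      then show ?thesis using TR by blast
    qed
  next
    case gin: False
    show ?thesis
    proof (cases "e \<in> E'")
      case ein: True
      show ?thesis
      proof (cases "y2 \<ge> ?C")
        case True
        then have "X'!g \<le> Y'!g - real (k+1) * ?C" "X'!e \<le> Y'!e + real (k+1) * ?C" "real (k+1) * ?C \<le> Y'!g - Y'!e"
          using X'g X'e Y'g Y'e gin ein kap' y2 k1 unfolding kk by auto
        then show ?thesis using TR by blast
      next
        case y2C: False
        show ?thesis
        proof (cases "y1 - \<kappa> \<ge> ?C")
          case True
          then have "X'!g \<le> Y'!g - real (k+1) * ?C" "X'!e \<le> Y'!e + real (k+1) * ?C" "real (k+1) * ?C \<le> Y'!g - Y'!e"
            using X'g X'e Y'g Y'e gin ein kap' y2C y2 k1 unfolding kk by auto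
          then show ?thesis using TR by blast
        next
          case False
          then have "X'!g \<le> Y'!e" "X'!e \<le> Y'!g"
            using X'g X'e Y'g Y'e gin ein kap' y2C y2 k1 by auto
          then show ?thesis using SW by blast
        qed
      qed
    next
      case ein: False
      have "X'!g \<le> Y'!g - real k * ?C" "X'!e \<le> Y'!e + real k * ?C" "real k * ?C \<le> Y'!g - Y'!e"
        using X'g X'e Y'g Y'e gin ein kap' y2 k1 unfolding \<kappa>_def[symmetric] by auto
      then show ?thesis using TR by blast
    qed
  qed
  show ?thesis using emE main unfolding X'_def Y'_def by blast
qed

lemma nonneg_swl: "nonneg Y \<Longrightarrow> g < length Y \<Longrightarrow> e < length Y \<Longrightarrow> nonneg (swl g e Y)"
  unfolding nonneg_def using mset_eq_setD[OF mset_swl] by metis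

lemma nonneg_tr: "nonneg Y \<Longrightarrow> g < length Y \<Longrightarrow> e < length Y \<Longrightarrow> 0 \<le> k \<Longrightarrow> k \<le> Y!g - Y!e \<Longrightarrow> nonneg (tr g e k Y)"
  unfolding nonneg_nth by (auto simp: nth_tr)

lemma pw_len: "pw X Y \<Longrightarrow> length X = length Y" by (simp add: pw_def)

definition Mono :: "nat set \<Rightarrow> real \<Rightarrow> nat \<Rightarrow> nat \<Rightarrow> bool" where
  "Mono Ps \<epsilon> n t \<longleftrightarrow> (\<forall>L R. length L = n \<longrightarrow> length R = n \<longrightarrow> nonneg L \<longrightarrow> nonneg R \<longrightarrow>
     (pw L R \<longrightarrow> OPT Ps \<epsilon> L t \<le> OPT Ps \<epsilon> R t) \<and>
     (\<forall>g e. g < n \<longrightarrow> e < n \<longrightarrow> L = swl g e R \<longrightarrow> OPT Ps \<epsilon> L t \<le> OPT Ps \<epsilon> R t) \<and>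
     (\<forall>g e k. g < n \<longrightarrow> e < n \<longrightarrow> g \<noteq> e \<longrightarrow> real k * (1+\<epsilon>) \<le> R!g - R!e \<longrightarrow>
         L = tr g e (real k * (1+\<epsilon>)) R \<longrightarrow> OPT Ps \<epsilon> L t \<le> OPT Ps \<epsilon> R t))"

lemma Mono_0: assumes "n > 0" "\<epsilon> \<ge> 0" shows "Mono Ps \<epsilon> n 0"
  unfolding Mono_def OPT.simps
proof (intro allI impI conjI)
  fix L R :: "real list" assume l: "length L = n" "length R = n" "nonneg L" "nonneg R"
  show "pw L R \<Longrightarrow> backlog L \<le> backlog R"
    by (rule backlog_le) (use l assms in \<open>auto simp: pw_def\<close>)
  fix g e assume ge: "g < n" "e < n"
  show "L = swl g e R \<Longrightarrow> backlog L \<le> backlog R"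
  proof (rule backlog_le)
    assume L: "L = swl g e R"
    show "0 < length L" using l assms by simp
    show "\<forall>i<length L. \<exists>j<length R. L ! i \<le> R ! j"
    proof (intro allI impI)
      fix i assume i: "i < length L"
      have "Transposition.transpose g e i < length R" using i ge l by (auto simp: transpose_def)
      then show "\<exists>j<length R. L ! i \<le> R ! j" using i ge l L by (auto simp: nth_swl)
    qed
  qed
  fix k assume ne: "g \<noteq> e" and kap: "real k * (1+\<epsilon>) \<le> R!g - R!e"
  have k0: "0 \<le> real k * (1+\<epsilon>)" using assms by simp
  show "L = tr g e (real k * (1+\<epsilon>)) R \<Longrightarrow> backlog L \<le> backlog R"
  proof (rule backlog_le)
    assume L: "L = tr g e (real k * (1+\<epsilon>)) R"
    show "0 < length L" using l assms by simp
    show "\<forall>i<length L. \<exists>j<length R. L ! i \<le> R ! j"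
    proof (intro allI impI)
      fix i assume i: "i < length L"
      show "\<exists>j<length R. L ! i \<le> R ! j"
      proof (cases "i = g \<or> i = e")
        case True
        then have "L!i \<le> R!g" using L i kap k0 ne by (auto simp: nth_tr)
        then show ?thesis using ge l by auto
      next
        case False
        then have "L!i \<le> R!i" using L i by (simp add: nth_tr)
        then show ?thesis using i l by auto
      qed
    qed
  qed
qed

lemma Mono_Suc:
  assumes ok: "PsOK n Ps" and n0: "n > 0" and eps: "\<epsilon> \<ge> 0" and IH: "Mono Ps \<epsilon> n t"
  shows "Mono Ps \<epsilon> n (Suc t)"
proof -
  have h1: "OPT Ps \<epsilon> X t \<le> OPT Ps \<epsilon> Y t" if "length X = n" "length Y = n" "nonneg X" "nonneg Y" "pw X Y" for X Y
    using IH that unfolding Mono_def by blast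
  have h2: "OPT Ps \<epsilon> X t \<le> OPT Ps \<epsilon> Y t" if "length X = n" "length Y = n" "nonneg X" "nonneg Y"
    "g < n" "e < n" "X = swl g e Y" for X Y g e
    using IH that unfolding Mono_def by blast
  have h2': "OPT Ps \<epsilon> X t \<le> OPT Ps \<epsilon> Y t" if "length X = n" "length Y = n" "nonneg X" "nonneg Y"
    "g < n" "e < n" "pw X (swl g e Y)" for X Y g e
  proof -
    have "nonneg (swl g e Y)" using that by (intro nonneg_swl) auto
    then have "OPT Ps \<epsilon> X t \<le> OPT Ps \<epsilon> (swl g e Y) t" using that by (intro h1) auto
    also have "\<dots> \<le> OPT Ps \<epsilon> Y t" using that \<open>nonneg (swl g e Y)\<close> by (intro h2) auto
    finally show ?thesis .
  qed
  have h3: "OPT Ps \<epsilon> X t \<le> OPT Ps \<epsilon> Y t" if "length X = n" "length Y = n" "nonneg X" "nonneg Y"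
    "g < n" "e < n" "g \<noteq> e" "real j * (1+\<epsilon>) \<le> Y!g - Y!e" "pw X (tr g e (real j * (1+\<epsilon>)) Y)" for X Y g e j
  proof -
    have nt: "nonneg (tr g e (real j * (1+\<epsilon>)) Y)" using that eps by (intro nonneg_tr) auto
    then have "OPT Ps \<epsilon> X t \<le> OPT Ps \<epsilon> (tr g e (real j * (1+\<epsilon>)) Y) t" using that by (intro h1) auto
    also have "\<dots> \<le> OPT Ps \<epsilon> Y t"
    proof -
      have lt: "length (tr g e (real j * (1+\<epsilon>)) Y) = n" using that by simp
      have C3: "\<forall>ga ea k. ga < n \<longrightarrow> ea < n \<longrightarrow> ga \<noteq> ea \<longrightarrow> real k * (1+\<epsilon>) \<le> Y!ga - Y!ea \<longrightarrow>
         tr g e (real j * (1+\<epsilon>)) Y = tr ga ea (real k * (1+\<epsilon>)) Y \<longrightarrow>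
         OPT Ps \<epsilon> (tr g e (real j * (1+\<epsilon>)) Y) t \<le> OPT Ps \<epsilon> Y t"
        using IH[unfolded Mono_def, rule_format, OF lt that(2) nt that(4)] by (elim conjE)
      show ?thesis by (rule C3[rule_format, of g e j]) (use that in auto)
    qed
    finally show ?thesis .
  qed
  show ?thesis unfolding Mono_def
  proof (intro allI impI conjI)
    fix L R :: "real list" assume l: "length L = n" "length R = n" "nonneg L" "nonneg R"
    have okR: "PsOK (length R) Ps" using ok l by simp
    have nnR: "\<forall>x\<in>set R. 0 \<le> x" using l by (simp add: nonneg_def)
    have lens: "length L = length R" "length R > 0" using l n0 by auto
    show "pw L R \<Longrightarrow> OPT Ps \<epsilon> L (Suc t) \<le> OPT Ps \<epsilon> R (Suc t)"
    proof (rule opt_step[OF okR lens nnR eps])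
      fix p a assume pwLR: "pw L R" and "p \<in> Ps" and fm: "filler_move p L a"
      have S: "filler_move p R a \<and> (\<forall>E'. emptier_move p (fill R a) E' \<longrightarrow> emptier_move p (fill L a) E' \<and>
           pw (empty_cups \<epsilon> E' (fill L a)) (empty_cups \<epsilon> E' (fill R a)))" by (rule sim_pw[OF pwLR fm])
      have fmR: "filler_move p R a" using S by blast
      show "\<exists>a'. filler_move p R a' \<and> (\<forall>E'. emptier_move p (fill R a') E' \<longrightarrow> (\<exists>E. emptier_move p (fill L a) E \<and>
          OPT Ps \<epsilon> (empty_cups \<epsilon> E (fill L a)) t \<le> OPT Ps \<epsilon> (empty_cups \<epsilon> E' (fill R a')) t))"
      proof (rule exI[of _ a], intro conjI allI impI)
        show "filler_move p R a" by (rule fmR)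
        fix E' assume E': "emptier_move p (fill R a) E'"
        show "\<exists>E. emptier_move p (fill L a) E \<and>
          OPT Ps \<epsilon> (empty_cups \<epsilon> E (fill L a)) t \<le> OPT Ps \<epsilon> (empty_cups \<epsilon> E' (fill R a)) t"
        proof (rule exI[of _ E'], intro conjI)
          show "emptier_move p (fill L a) E'" using S E' by blast
          show "OPT Ps \<epsilon> (empty_cups \<epsilon> E' (fill L a)) t \<le> OPT Ps \<epsilon> (empty_cups \<epsilon> E' (fill R a)) t"
            using S E' l filler_len[OF fm] filler_len[OF fmR] nonneg_after[OF l(3) fm] nonneg_after[OF l(4) fmR]
            by (intro h1) auto
        qed
      qed
    qed
    fix g e assume ge: "g < n" "e < n"
    show "L = swl g e R \<Longrightarrow> OPT Ps \<epsilon> L (Suc t) \<le> OPT Ps \<epsilon> R (Suc t)"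
    proof (rule opt_step[OF okR lens nnR eps])
      fix p a assume L: "L = swl g e R" and "p \<in> Ps" and fm: "filler_move p L a"
      have S: "filler_move p R (swl g e a) \<and> fill L a = swl g e (fill R (swl g e a))"
        by (rule swap_fill[OF L _ _ fm]) (use ge l in auto)
      let ?a' = "swl g e a"
      have fmR: "filler_move p R ?a'" using S by blast
      have la': "length ?a' = n" using filler_len[OF fmR] l by simp
      show "\<exists>a'. filler_move p R a' \<and> (\<forall>E'. emptier_move p (fill R a') E' \<longrightarrow> (\<exists>E. emptier_move p (fill L a) E \<and>
          OPT Ps \<epsilon> (empty_cups \<epsilon> E (fill L a)) t \<le> OPT Ps \<epsilon> (empty_cups \<epsilon> E' (fill R a')) t))"
      proof (rule exI[of _ ?a'], intro conjI allI impI)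
        show "filler_move p R ?a'" by (rule fmR)
        fix E' assume E': "emptier_move p (fill R ?a') E'"
        let ?E = "Transposition.transpose g e ` E'"
        have T: "emptier_move p (fill L a) ?E \<and>
          empty_cups \<epsilon> ?E (fill L a) = swl g e (empty_cups \<epsilon> E' (fill R ?a'))"
          by (rule swap_empty[OF _ _ _ E']) (use S ge l la' in auto)
        show "\<exists>E. emptier_move p (fill L a) E \<and>
          OPT Ps \<epsilon> (empty_cups \<epsilon> E (fill L a)) t \<le> OPT Ps \<epsilon> (empty_cups \<epsilon> E' (fill R ?a')) t"
        proof (rule exI[of _ ?E], intro conjI)
          show "emptier_move p (fill L a) ?E" using T by blast
          show "OPT Ps \<epsilon> (empty_cups \<epsilon> ?E (fill L a)) t \<le> OPT Ps \<epsilon> (empty_cups \<epsilon> E' (fill R ?a')) t"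
            by (rule h2[of _ _ g e, OF _ _ nonneg_after(2)[OF l(3) fm] nonneg_after(2)[OF l(4) fmR] ge conjunct2[OF T]])
              (use l filler_len[OF fm] la' in auto)
        qed
      qed
    qed
    fix k assume ne: "g \<noteq> e" and kap: "real k * (1+\<epsilon>) \<le> R!g - R!e"
    show "L = tr g e (real k * (1+\<epsilon>)) R \<Longrightarrow> OPT Ps \<epsilon> L (Suc t) \<le> OPT Ps \<epsilon> R (Suc t)"
    proof (rule opt_step[OF okR lens nnR eps])
      fix p a assume L: "L = tr g e (real k * (1+\<epsilon>)) R" and "p \<in> Ps" and fm: "filler_move p L a"
      obtain a' where fmR: "filler_move p R a'" and
        cs: "(fill L a = tr g e (real k * (1+\<epsilon>)) (fill R a') \<and> real k * (1+\<epsilon>) \<le> fill R a' ! g - fill R a' ! e)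
            \<or> fill L a = swl g e (fill R a')"
        using tr_fill[OF L _ _ ne kap fm] ge l by auto
      have la': "length a' = n" using filler_len[OF fmR] l by simp
      have la: "length a = n" using filler_len[OF fm] l by simp
      have nX: "nonneg (fill L a)" and nY: "nonneg (fill R a')"
        using nonneg_after[OF l(3) fm] nonneg_after[OF l(4) fmR] by auto
      have nX': "nonneg (empty_cups \<epsilon> E (fill L a))" and nY': "nonneg (empty_cups \<epsilon> E' (fill R a'))" for E E'
        using nonneg_after[OF l(3) fm] nonneg_after[OF l(4) fmR] by auto
      show "\<exists>a'. filler_move p R a' \<and> (\<forall>E'. emptier_move p (fill R a') E' \<longrightarrow> (\<exists>E. emptier_move p (fill L a) E \<and>
          OPT Ps \<epsilon> (empty_cups \<epsilon> E (fill L a)) t \<le> OPT Ps \<epsilon> (empty_cups \<epsilon> E' (fill R a')) t))"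
      proof (rule exI[of _ a'], intro conjI allI impI)
        show "filler_move p R a'" by (rule fmR)
        fix E' assume E': "emptier_move p (fill R a') E'"
        show "\<exists>E. emptier_move p (fill L a) E \<and>
          OPT Ps \<epsilon> (empty_cups \<epsilon> E (fill L a)) t \<le> OPT Ps \<epsilon> (empty_cups \<epsilon> E' (fill R a')) t"
        proof (cases "fill L a = swl g e (fill R a')")
          case True
          let ?E = "Transposition.transpose g e ` E'"
          have T: "emptier_move p (fill L a) ?E \<and>
            empty_cups \<epsilon> ?E (fill L a) = swl g e (empty_cups \<epsilon> E' (fill R a'))"
            by (rule swap_empty[OF True _ _ E']) (use ge l la' in auto)
          show ?thesis
          proof (rule exI[of _ ?E], intro conjI)
            show "emptier_move p (fill L a) ?E" using T by blast
            show "OPT Ps \<epsilon> (empty_cups \<epsilon> ?E (fill L a)) t \<le> OPT Ps \<epsilon> (empty_cups \<epsilon> E' (fill R a')) t"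
              by (rule h2[of _ _ g e, OF _ _ nX' nY' ge conjunct2[OF T]]) (use l la la' in auto)
          qed
        next
          case False
          then have X: "fill L a = tr g e (real k * (1+\<epsilon>)) (fill R a')" and
            kap': "real k * (1+\<epsilon>) \<le> fill R a' ! g - fill R a' ! e" using cs by auto
          obtain E where E: "emptier_move p (fill L a) E" and
            D: "pw (empty_cups \<epsilon> E (fill L a)) (empty_cups \<epsilon> E' (fill R a')) \<or>
                pw (empty_cups \<epsilon> E (fill L a)) (swl g e (empty_cups \<epsilon> E' (fill R a'))) \<or>
               (\<exists>j. real j * (1+\<epsilon>) \<le> empty_cups \<epsilon> E' (fill R a') ! g - empty_cups \<epsilon> E' (fill R a') ! e \<and>
                pw (empty_cups \<epsilon> E (fill L a)) (tr g e (real j * (1+\<epsilon>)) (empty_cups \<epsilon> E' (fill R a'))))"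
            using tr_empty[OF X _ _ ne kap' nY eps E'] ge l la' by auto
          have lX': "length (empty_cups \<epsilon> E (fill L a)) = n" and lY': "length (empty_cups \<epsilon> E' (fill R a')) = n"
            using l la la' by auto
          have "OPT Ps \<epsilon> (empty_cups \<epsilon> E (fill L a)) t \<le> OPT Ps \<epsilon> (empty_cups \<epsilon> E' (fill R a')) t"
            using D
          proof (elim disjE exE conjE)
            assume "pw (empty_cups \<epsilon> E (fill L a)) (empty_cups \<epsilon> E' (fill R a'))"
            then show ?thesis using lX' lY' nX' nY' by (intro h1) auto
          next
            assume "pw (empty_cups \<epsilon> E (fill L a)) (swl g e (empty_cups \<epsilon> E' (fill R a')))"
            then show ?thesis using lX' lY' nX' nY' ge by (intro h2') auto
          next
            fix j assume "real j * (1+\<epsilon>) \<le> empty_cups \<epsilon> E' (fill R a') ! g - empty_cups \<epsilon> E' (fill R a') ! e"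
              "pw (empty_cups \<epsilon> E (fill L a)) (tr g e (real j * (1+\<epsilon>)) (empty_cups \<epsilon> E' (fill R a')))"
            then show ?thesis using lX' lY' nX' nY' ge ne by (intro h3) auto
          qed
          then show ?thesis using E by blast
        qed
      qed
    qed
  qed
qed

lemma Mono_all: assumes "PsOK n Ps" "n > 0" "\<epsilon> \<ge> 0" shows "Mono Ps \<epsilon> n t"
  by (induction t) (use assms Mono_0 Mono_Suc in auto)

lemma greedy_ex: assumes "p \<le> length X" shows "\<exists>G. greedy_move p X G"
proof -
  let ?A = "{E. emptier_move p X E}"
  let ?h = "\<lambda>E. \<Sum>i\<in>E. X!i"
  have fin: "finite ?A" by (rule finite_emptier)
  have ne: "?A \<noteq> {}" using emptier_ex[OF assms] by blast
  have "Max (?h ` ?A) \<in> ?h ` ?A" using fin ne by (intro Max_in) auto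
  then obtain G where G: "G \<in> ?A" "?h G = Max (?h ` ?A)" by auto
  have mx: "?h E \<le> ?h G" if "E \<in> ?A" for E using G fin that by (simp add: Max_ge)
  have "greedy_move p X G"
    unfolding greedy_move_def
  proof (intro conjI ballI allI impI)
    show "emptier_move p X G" using G by simp
    fix i j assume i: "i \<in> G" and j: "j < length X" "j \<notin> G"
    show "X!j \<le> X!i"
    proof (rule ccontr)
      assume c: "\<not> X!j \<le> X!i"
      have sub: "G \<subseteq> {..<length X}" and cG: "card G = p" using G by (auto simp: emptier_move_def)
      have finG: "finite G" using sub finite_subset by blast
      let ?E = "insert j (G - {i})"
      have c1: "card (G - {i}) = p - 1" using finG i cG by (simp add: card_Diff_singleton)
      have p0: "p > 0" using finG i cG card_gt_0_iff by blast
      have "card ?E = Suc (card (G - {i}))" using finG j by (intro card_insert_disjoint) auto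
      then have "card ?E = p" using c1 p0 by simp
      moreover have "?E \<subseteq> {..<length X}" using sub j by auto
      ultimately have "?E \<in> ?A" by (simp add: emptier_move_def)
      then have "?h ?E \<le> ?h G" by (rule mx)
      moreover have "?h ?E = X!j + (?h G - X!i)" using finG i j by (simp add: sum_diff1)
      ultimately show False using c by simp
    qed
  qed
  then show ?thesis by blast
qed

lemma greedy_le:
  assumes M: "Mono Ps \<epsilon> n t" and eps: "\<epsilon> \<ge> 0" and lX: "length X = n" and nX: "nonneg X"
    and G: "greedy_move p X G"
  shows "emptier_move p X E \<Longrightarrow> OPT Ps \<epsilon> (empty_cups \<epsilon> G X) t \<le> OPT Ps \<epsilon> (empty_cups \<epsilon> E X) t"
proof (induction "card (E - G)" arbitrary: E rule: less_induct)
  case less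
  have subG: "G \<subseteq> {..<n}" and cG: "card G = p" using G lX by (auto simp: greedy_move_def emptier_move_def)
  have subE: "E \<subseteq> {..<n}" and cE: "card E = p" using less.prems lX by (auto simp: emptier_move_def)
  have finG: "finite G" and finE: "finite E" using subG subE finite_subset by auto
  have nn: "nonneg (empty_cups \<epsilon> E' X)" for E' using nX unfolding nonneg_nth by (auto simp: nth_empty)
  have M1: "OPT Ps \<epsilon> A t \<le> OPT Ps \<epsilon> B t" if "length A = n" "length B = n" "nonneg A" "nonneg B" "pw A B" for A B
    using M that unfolding Mono_def by blast
  have M2: "OPT Ps \<epsilon> (swl g e B) t \<le> OPT Ps \<epsilon> B t" if "length B = n" "nonneg B" "g < n" "e < n" for B g e
  proof -
    have ns: "nonneg (swl g e B)" using that by (intro nonneg_swl) auto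
    have l2: "length (swl g e B) = n" using that by simp
    note C = M[unfolded Mono_def, rule_format, OF l2 that(1) ns that(2)]
    show ?thesis by (rule conjunct1[OF conjunct2[OF C], rule_format, of g e]) (use that in auto)
  qed
  have M3: "OPT Ps \<epsilon> (tr g e (real k * (1+\<epsilon>)) B) t \<le> OPT Ps \<epsilon> B t"
    if "length B = n" "nonneg B" "g < n" "e < n" "g \<noteq> e" "real k * (1+\<epsilon>) \<le> B!g - B!e" for B g e k
  proof -
    have "nonneg (tr g e (real k * (1+\<epsilon>)) B)" using that eps by (intro nonneg_tr) auto
    moreover have l2: "length (tr g e (real k * (1+\<epsilon>)) B) = n" using that by simp
    ultimately show ?thesis
      using conjunct2[OF conjunct2[OF M[unfolded Mono_def, rule_format, OF l2 that(1) _ that(2)]], rule_format, of g e k] that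
      by auto
  qed
  show ?case
  proof (cases "E - G = {}")
    case True
    then have "E \<subseteq> G" by blast
    then have "E = G" using finG cE cG by (metis card_subset_eq)
    then show ?thesis by simp
  next
    case False
    then obtain e where e: "e \<in> E" "e \<notin> G" by blast
    have "card (E - G) = card E - card (E \<inter> G)" using finE by (intro card_Diff_subset_Int) auto
    moreover have "card (G - E) = card G - card (G \<inter> E)" using finG by (intro card_Diff_subset_Int) auto
    moreover have "E \<inter> G = G \<inter> E" by blast
    ultimately have "card (G - E) = card (E - G)" using cE cG by simp
    moreover have "card (E - G) > 0" using False finE by (simp add: card_gt_0_iff)
    ultimately have "G - E \<noteq> {}" by (metis card.empty less_irrefl)
    then obtain g where g: "g \<in> G" "g \<notin> E" by blast
    have ge: "g < n" "e < n" "g \<noteq> e" using g e subG subE by auto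
    have Xeg: "X!e \<le> X!g" using G g e ge lX unfolding greedy_move_def by auto
    define E2 where "E2 = insert g (E - {e})"
    have em2: "emptier_move p X E2"
    proof -
      have c1: "card (E - {e}) = p - 1" using finE e cE by (simp add: card_Diff_singleton)
      have p0: "p > 0" using finE e cE card_gt_0_iff by blast
      have "card E2 = Suc (card (E - {e}))" unfolding E2_def using finE g by (intro card_insert_disjoint) auto
      then have "card E2 = p" using c1 p0 by simp
      moreover have "E2 \<subseteq> {..<length X}" using subE ge lX by (auto simp: E2_def)
      ultimately show ?thesis by (simp add: emptier_move_def)
    qed
    have "E2 - G = (E - G) - {e}" using g by (auto simp: E2_def)
    moreover have "card ((E - G) - {e}) < card (E - G)" by (rule card_Diff1_less) (use e finE in auto)
    ultimately have "card (E2 - G) < card (E - G)" by simp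
    then have IH: "OPT Ps \<epsilon> (empty_cups \<epsilon> G X) t \<le> OPT Ps \<epsilon> (empty_cups \<epsilon> E2 X) t"
      using less.hyps em2 by blast
    let ?X' = "empty_cups \<epsilon> E2 X" and ?Y' = "empty_cups \<epsilon> E X"
    have l': "length ?X' = n" "length ?Y' = n" using lX by auto
    have X'g: "?X'!g = max 0 (X!g - (1+\<epsilon>))" and X'e: "?X'!e = X!e"
      using ge lX e g by (auto simp: nth_empty E2_def)
    have Y'g: "?Y'!g = X!g" and Y'e: "?Y'!e = max 0 (X!e - (1+\<epsilon>))"
      using ge lX e g by (auto simp: nth_empty)
    have oth: "?X'!i \<le> ?Y'!i" if "i < n" "i \<noteq> g" "i \<noteq> e" for i
      using that lX by (auto simp: nth_empty E2_def)
    have "OPT Ps \<epsilon> ?X' t \<le> OPT Ps \<epsilon> ?Y' t"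
    proof (cases "X!g < 1 + \<epsilon>")
      case True
      have "pw ?X' (swl g e ?Y')"
        by (rule pw_swl_intro) (use l' ge X'g X'e Y'g Y'e True Xeg oth in auto)
      then have "OPT Ps \<epsilon> ?X' t \<le> OPT Ps \<epsilon> (swl g e ?Y') t"
        using l' nn nonneg_swl[of ?Y' g e] ge by (intro M1) auto
      also have "\<dots> \<le> OPT Ps \<epsilon> ?Y' t" using l' nn ge by (intro M2) auto
      finally show ?thesis .
    next
      case False
      have "pw ?X' (tr g e (real 1 * (1+\<epsilon>)) ?Y')"
        by (rule pw_tr_intro) (use l' ge X'g X'e Y'g Y'e False Xeg oth in auto)
      moreover have cond: "real 1 * (1+\<epsilon>) \<le> ?Y'!g - ?Y'!e" using Y'g Y'e False Xeg eps by auto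
      moreover have "nonneg (tr g e (real 1 * (1+\<epsilon>)) ?Y')" using nn l' ge cond eps by (intro nonneg_tr) auto
      ultimately have "OPT Ps \<epsilon> ?X' t \<le> OPT Ps \<epsilon> (tr g e (real 1 * (1+\<epsilon>)) ?Y') t"
        using l' nn by (intro M1) auto
      also have "\<dots> \<le> OPT Ps \<epsilon> ?Y' t" using l' nn ge cond by (intro M3) auto
      finally show ?thesis .
    qed
    then show ?thesis using IH by linarith
  qed
qed

lemma main_eq:
  assumes ok: "PsOK n Ps" and n0: "n > 0" and eps: "\<epsilon> \<ge> 0"
  shows "\<forall>S. length S = n \<longrightarrow> nonneg S \<longrightarrow> GREEDY Ps \<epsilon> S t = OPT Ps \<epsilon> S t"
proof (induction t)
  case 0
  then show ?case by simp
next
  case (Suc t)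
  have M: "Mono Ps \<epsilon> n t" by (rule Mono_all[OF ok n0 eps])
  show ?case
  proof (intro allI impI)
    fix S assume lS: "length S = n" and nS: "nonneg S"
    show "GREEDY Ps \<epsilon> S (Suc t) = OPT Ps \<epsilon> S (Suc t)"
      unfolding GREEDY.simps OPT.simps
    proof (rule SUP_cong[OF refl])
      fix pa assume "pa \<in> {(p, a). p \<in> Ps \<and> filler_move p S a}"
      then obtain p a where pa: "pa = (p,a)" "p \<in> Ps" "filler_move p S a" by blast
      let ?X = "fill S a"
      have la: "length a = n" using filler_len[OF pa(3)] lS by simp
      have lX: "length ?X = n" using la lS by simp
      have nX: "nonneg ?X" by (rule nonneg_after(1)[OF nS pa(3)])
      have pn: "p \<le> length ?X" using ok pa(2) lX unfolding PsOK_def by auto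
      obtain G0 where G0: "greedy_move p ?X G0" using greedy_ex[OF pn] by blast
      have G0e: "emptier_move p ?X G0" using G0 by (simp add: greedy_move_def)
      have "(INF E\<in>{E. greedy_move p ?X E}. GREEDY Ps \<epsilon> (empty_cups \<epsilon> E ?X) t)
          = (INF E\<in>{E. greedy_move p ?X E}. OPT Ps \<epsilon> (empty_cups \<epsilon> E ?X) t)"
      proof (rule INF_cong[OF refl])
        fix E
        have "nonneg (empty_cups \<epsilon> E ?X)" by (rule nonneg_after(2)[OF nS pa(3)])
        moreover have "length (empty_cups \<epsilon> E ?X) = n" using lX by simp
        ultimately show "GREEDY Ps \<epsilon> (empty_cups \<epsilon> E ?X) t = OPT Ps \<epsilon> (empty_cups \<epsilon> E ?X) t"
          using Suc.IH by blast
      qed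
      also have "\<dots> = OPT Ps \<epsilon> (empty_cups \<epsilon> G0 ?X) t"
      proof (rule cInf_eq_minimum)
        show "OPT Ps \<epsilon> (empty_cups \<epsilon> G0 ?X) t \<in> (\<lambda>E. OPT Ps \<epsilon> (empty_cups \<epsilon> E ?X) t) ` {E. greedy_move p ?X E}"
          using G0 by blast
        fix x assume "x \<in> (\<lambda>E. OPT Ps \<epsilon> (empty_cups \<epsilon> E ?X) t) ` {E. greedy_move p ?X E}"
        then obtain E where "greedy_move p ?X E" "x = OPT Ps \<epsilon> (empty_cups \<epsilon> E ?X) t" by blast
        then show "OPT Ps \<epsilon> (empty_cups \<epsilon> G0 ?X) t \<le> x"
          using greedy_le[OF M eps lX nX G0] by (simp add: greedy_move_def)
      qed
      also have "\<dots> = (INF E\<in>{E. emptier_move p ?X E}. OPT Ps \<epsilon> (empty_cups \<epsilon> E ?X) t)"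
      proof (rule cInf_eq_minimum[symmetric])
        show "OPT Ps \<epsilon> (empty_cups \<epsilon> G0 ?X) t \<in> (\<lambda>E. OPT Ps \<epsilon> (empty_cups \<epsilon> E ?X) t) ` {E. emptier_move p ?X E}"
          using G0e by blast
        fix x assume "x \<in> (\<lambda>E. OPT Ps \<epsilon> (empty_cups \<epsilon> E ?X) t) ` {E. emptier_move p ?X E}"
        then obtain E where "emptier_move p ?X E" "x = OPT Ps \<epsilon> (empty_cups \<epsilon> E ?X) t" by blast
        then show "OPT Ps \<epsilon> (empty_cups \<epsilon> G0 ?X) t \<le> x"
          using greedy_le[OF M eps lX nX G0] by simp
      qed
      finally show "(INF E\<in>{E. greedy_move (fst pa) (fill S (snd pa)) E}. GREEDY Ps \<epsilon> (empty_cups \<epsilon> E (fill S (snd pa))) t)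
          = (INF E\<in>{E. emptier_move (fst pa) (fill S (snd pa)) E}. OPT Ps \<epsilon> (empty_cups \<epsilon> E (fill S (snd pa))) t)"
        using pa by simp
    qed
  qed
qed

theorem corollary4p5:
  fixes \<epsilon> :: real and n :: nat and Ps :: "nat set" and A :: "real list" and t :: nat
  assumes "\<epsilon> > 0"
    and "n \<ge> 1"
    and "(\<exists>p. 1 \<le> p \<and> p \<le> n \<and> Ps = {p}) \<or> Ps = {1..n}"
    and "length A = n"
    and "\<forall>x\<in>set A. 0 \<le> x"
  shows "GREEDY Ps \<epsilon> A t = OPT Ps \<epsilon> A t"
proof -
  have ok: "PsOK n Ps" using assms(2,3) unfolding PsOK_def by auto
  have "nonneg A" using assms(5) by (simp add: nonneg_def)
  then show ?thesis using main_eq[OF ok _ _, of \<epsilon> t] assms by auto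
qed

end
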